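(* Let $R$ be a blind bisimulation on the nodes of a $\lambda$-graph $G$ and let $Q$ be a binary relation with $Q\subseteq R$. Let $n,m$ be nodes with $n\,Q\,m$, and $\tau$ a trace such that the path $n\xrightarrow{\tau}$ crosses an abstraction node $l$ and the path $m\xrightarrow{\tau}$ crosses an abstraction node $l'$. If $l\,R\,l'$ then $l\,Q^{\Downarrow}\,l'$.
   Context: A pre-$\lambda$-graph is a directed graph whose nodes are of four kinds: an application node $@(n_1,n_2)$ has exactly two children, its left child $n_1$ and its right child $n_2$; an abstraction node $\lambda(n)$ has exactly one child, its body $n$; a free variable node has no children and carries an atom $\mathrm{id}(n)$ from a fixed set of atoms, distinct free variable nodes carrying distinct atoms; a bound variable node $\mathrm{var}(l)$ has exactly one outgoing binding edge, to an abstraction node $l$ (its binder). A trace is a finite sequence of directions from $\{\swarrow,\downarrow,\searrow\}$; $\epsilon$ is the empty trace and $d\cdot\tau$ is the trace $\tau$ extended by one final step $d$. Paths $n\xrightarrow{\tau}m$ are defined inductively: $n\xrightarrow{\epsilon}n$; if $n\xrightarrow{\tau}\lambda(m)$ then $n\xrightarrow{\downarrow\cdot\tau}m$; if $n\xrightarrow{\tau}@(m_1,m_2)$ then $n\xrightarrow{\swarrow\cdot\tau}m_1$ and $n\xrightarrow{\searrow\cdot\tau}m_2$ (binding edges are never followed). We write $n\xrightarrow{\tau}$ if $n\xrightarrow{\tau}m$ for some $m$. The path $n\xrightarrow{\tau}$ crosses a node $m$ if either $n\xrightarrow{\tau}m$, or $\tau=d\cdot\tau'$ and $n\xrightarrow{\tau'}$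 crosses $m$. A root is a node $r$ such that the only path ending in $r$ has the empty trace. A node $m$ dominates $n$ if every path from a root to $n$ crosses $m$. A $\lambda$-graph is a pre-$\lambda$-graph that has finitely many nodes, is acyclic ($n\xrightarrow{\tau}n$ holds only for $\tau=\epsilon$), and is dominated (every bound variable node $\mathrm{var}(l)$ is dominated by its binder $l$). Two nodes are homogeneous if both are application nodes, or both abstraction nodes, or both free variable nodes, or both bound variable nodes; a binary relation $R$ on nodes is homogeneous if it only relates homogeneous nodes. Rules: $(\swarrow)$: $@(n_1,n_2)\,R\,@(m_1,m_2)$ implies $n_1\,R\,m_1$; $(\searrow)$: $@(n_1,n_2)\,R\,@(m_1,m_2)$ implies $n_2\,R\,m_2$; $(\downarrow)$: $\lambda(n)\,R\,\lambda(m)$ implies $n\,R\,m$. $R$ is propagated if closed under $(\swarrow),(\downarrow),(\searrow)$. A blind bisimulation is a homogeneous propagated relation. $R^{\Downarrow}$ (propagation) is the smallest propagated relation containing $R$. *)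

theory Defs
  imports Main
begin

datatype ('n, 'a) node_kind =
    App 'n 'n
  | Lam 'n
  | FVar 'a
  | BVar 'n        (* bound variable node var(l): binding edge to l *)

datatype dir = SW | Down | SE

(* A trace is a list of directions; d # tau stands for d . tau, i.e. tau
   extended by one FINAL step d.  [] is the empty trace epsilon. *)
type_synonym trace = "dir list"

inductive path :: "('n \<Rightarrow> ('n, 'a) node_kind) \<Rightarrow> 'n \<Rightarrow> trace \<Rightarrow> 'n \<Rightarrow> bool"
  for lab where
  path_eps: "path lab n [] n"
| path_down: "path lab n \<tau> l \<Longrightarrow> lab l = Lam m \<Longrightarrow> path lab n (Down # \<tau>) m"
| path_sw: "path lab n \<tau> a \<Longrightarrow> lab a = App m1 m2 \<Longrightarrow> path lab n (SW # \<tau>) m1"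
| path_se: "path lab n \<tau> a \<Longrightarrow> lab a = App m1 m2 \<Longrightarrow> path lab n (SE # \<tau>) m2"

inductive crosses :: "('n \<Rightarrow> ('n, 'a) node_kind) \<Rightarrow> 'n \<Rightarrow> trace \<Rightarrow> 'n \<Rightarrow> bool"
  for lab where
  crosses_here: "path lab n \<tau> m \<Longrightarrow> crosses lab n \<tau> m"
| crosses_prefix: "crosses lab n \<tau>' m \<Longrightarrow> crosses lab n (d # \<tau>') m"

definition pre_lambda_graph :: "'n set \<Rightarrow> ('n \<Rightarrow> ('n, 'a) node_kind) \<Rightarrow> bool" where
  "pre_lambda_graph N lab \<longleftrightarrow>
     (\<forall>n\<in>N. (\<forall>n1 n2. lab n = App n1 n2 \<longrightarrow> n1 \<in> N \<and> n2 \<in> N)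
           \<and> (\<forall>b. lab n = Lam b \<longrightarrow> b \<in> N)
           \<and> (\<forall>l. lab n = BVar l \<longrightarrow> l \<in> N \<and> (\<exists>b. lab l = Lam b))) \<and>
     (\<forall>n\<in>N. \<forall>m\<in>N. \<forall>x. lab n = FVar x \<and> lab m = FVar x \<longrightarrow> n = m)"

definition is_root :: "'n set \<Rightarrow> ('n \<Rightarrow> ('n, 'a) node_kind) \<Rightarrow> 'n \<Rightarrow> bool" where
  "is_root N lab r \<longleftrightarrow> r \<in> N \<and> (\<forall>x\<in>N. \<forall>\<tau>. path lab x \<tau> r \<longrightarrow> \<tau> = [])"

definition dominates :: "'n set \<Rightarrow> ('n \<Rightarrow> ('n, 'a) node_kind) \<Rightarrow> 'n \<Rightarrow> 'n \<Rightarrow> bool" where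
  "dominates N lab m n \<longleftrightarrow>
     (\<forall>r \<tau>. is_root N lab r \<longrightarrow> path lab r \<tau> n \<longrightarrow> crosses lab r \<tau> m)"

definition lambda_graph :: "'n set \<Rightarrow> ('n \<Rightarrow> ('n, 'a) node_kind) \<Rightarrow> bool" where
  "lambda_graph N lab \<longleftrightarrow>
     pre_lambda_graph N lab \<and> finite N \<and>
     (\<forall>n\<in>N. \<forall>\<tau>. path lab n \<tau> n \<longrightarrow> \<tau> = []) \<and>
     (\<forall>n\<in>N. \<forall>l. lab n = BVar l \<longrightarrow> dominates N lab l n)"

definition homogeneous_nodes :: "('n \<Rightarrow> ('n, 'a) node_kind) \<Rightarrow> 'n \<Rightarrow> 'n \<Rightarrow> bool" where
  "homogeneous_nodes lab n m \<longleftrightarrow>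
     (\<exists>a b c d. lab n = App a b \<and> lab m = App c d) \<or>
     (\<exists>a b. lab n = Lam a \<and> lab m = Lam b) \<or>
     (\<exists>a b. lab n = FVar a \<and> lab m = FVar b) \<or>
     (\<exists>a b. lab n = BVar a \<and> lab m = BVar b)"

definition homogeneous :: "('n \<Rightarrow> ('n, 'a) node_kind) \<Rightarrow> 'n rel \<Rightarrow> bool" where
  "homogeneous lab R \<longleftrightarrow> (\<forall>(n, m)\<in>R. homogeneous_nodes lab n m)"

definition propagated :: "('n \<Rightarrow> ('n, 'a) node_kind) \<Rightarrow> 'n rel \<Rightarrow> bool" where
  "propagated lab R \<longleftrightarrow>
     (\<forall>n m n1 n2 m1 m2. (n, m) \<in> R \<longrightarrow> lab n = App n1 n2 \<longrightarrow> lab m = App m1 m2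
        \<longrightarrow> (n1, m1) \<in> R \<and> (n2, m2) \<in> R) \<and>
     (\<forall>n m a b. (n, m) \<in> R \<longrightarrow> lab n = Lam a \<longrightarrow> lab m = Lam b \<longrightarrow> (a, b) \<in> R)"

definition blind_bisimulation :: "('n \<Rightarrow> ('n, 'a) node_kind) \<Rightarrow> 'n rel \<Rightarrow> bool" where
  "blind_bisimulation lab R \<longleftrightarrow> homogeneous lab R \<and> propagated lab R"

(* R^\<Down>: smallest propagated relation containing R *)
definition propagation :: "('n \<Rightarrow> ('n, 'a) node_kind) \<Rightarrow> 'n rel \<Rightarrow> 'n rel" where
  "propagation lab R = \<Inter>{S. R \<subseteq> S \<and> propagated lab S}"

end

theory Submission imports Defs begin
inductive_cases pathE_Nil: "path lab n [] m"
inductive_cases pathE_Down: "path lab n (Down # \<tau>) m"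
inductive_cases pathE_SW: "path lab n (SW # \<tau>) m"
inductive_cases pathE_SE: "path lab n (SE # \<tau>) m"
lemma path_Nil[simp]: "path lab n [] m \<longleftrightarrow> m = n"
  by (blast elim: pathE_Nil intro: path.intros)
lemma path_Down[simp]: "path lab n (Down # \<tau>) m \<longleftrightarrow> (\<exists>l. path lab n \<tau> l \<and> lab l = Lam m)"
  by (blast elim: pathE_Down intro: path.intros)
lemma path_SW[simp]: "path lab n (SW # \<tau>) m \<longleftrightarrow> (\<exists>a m2. path lab n \<tau> a \<and> lab a = App m m2)"
  by (blast elim: pathE_SW intro: path.intros)
lemma path_SE[simp]: "path lab n (SE # \<tau>) m \<longleftrightarrow> (\<exists>a m1. path lab n \<tau> a \<and> lab a = App m1 m)"
  by (blast elim: pathE_SE intro: path.intros)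

lemma path_det: "path lab n \<tau> x \<Longrightarrow> path lab n \<tau> y \<Longrightarrow> x = y"
proof (induction \<tau> arbitrary: x y)
  case Nil then show ?case by simp
next
  case (Cons d \<tau>) then show ?case by (cases d; clarsimp; metis node_kind.inject)
qed

lemma path_app: "path lab x \<tau>2 y \<Longrightarrow> path lab n \<tau>1 x \<Longrightarrow> path lab n (\<tau>2 @ \<tau>1) y"
proof (induction \<tau>2 arbitrary: y)
  case Nil then show ?case by simp
next
  case (Cons d \<tau>)
  show ?case
  proof (cases d)
    case Down then obtain l where "path lab x \<tau> l" "lab l = Lam y" using Cons.prems by auto
    then show ?thesis using Cons.IH[of l] Cons.prems(2) Down by auto
  next
    case SW then obtain l m2 where "path lab x \<tau> l" "lab l = App y m2" using Cons.prems by auto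
    then show ?thesis using Cons.IH[of l] Cons.prems(2) SW by auto
  next
    case SE then obtain l m2 where "path lab x \<tau> l" "lab l = App m2 y" using Cons.prems by auto
    then show ?thesis using Cons.IH[of l] Cons.prems(2) SE by auto
  qed
qed

lemma path_split: "path lab n (\<tau>0 @ \<tau>1) x \<Longrightarrow> \<exists>y. path lab n \<tau>1 y \<and> path lab y \<tau>0 x"
proof (induction \<tau>0 arbitrary: x)
  case Nil then show ?case by simp
next
  case (Cons d \<tau>0)
  show ?case
  proof (cases d)
    case Down then obtain l where "path lab n (\<tau>0 @ \<tau>1) l" "lab l = Lam x" using Cons.prems by auto
    then show ?thesis using Cons.IH[of l] Down by auto
  next
    case SW then obtain l m2 where "path lab n (\<tau>0 @ \<tau>1) l" "lab l = App x m2" using Cons.prems by auto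
    then show ?thesis using Cons.IH[of l] SW by auto
  next
    case SE then obtain l m2 where "path lab n (\<tau>0 @ \<tau>1) l" "lab l = App m2 x" using Cons.prems by auto
    then show ?thesis using Cons.IH[of l] SE by auto
  qed
qed

lemma crosses_ex: "crosses lab n \<tau> m \<Longrightarrow> \<exists>\<tau>0 \<tau>1. \<tau> = \<tau>0 @ \<tau>1 \<and> path lab n \<tau>1 m"
proof (induction rule: crosses.induct)
  case (crosses_here n \<tau> m) then show ?case by (metis append_Nil)
next
  case (crosses_prefix n \<tau>' m d) then show ?case by (metis append_Cons)
qed

lemma prop_lam: "propagated lab S \<Longrightarrow> (x, y) \<in> S \<Longrightarrow> lab x = Lam a \<Longrightarrow> lab y = Lam b \<Longrightarrow> (a, b) \<in> S"
  unfolding propagated_def by blast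
lemma prop_app: "propagated lab S \<Longrightarrow> (x, y) \<in> S \<Longrightarrow> lab x = App a1 a2 \<Longrightarrow> lab y = App b1 b2 \<Longrightarrow> (a1, b1) \<in> S \<and> (a2, b2) \<in> S"
  unfolding propagated_def by blast

lemma prop_path: "propagated lab S \<Longrightarrow> (a, c) \<in> S \<Longrightarrow> path lab a \<sigma> b \<Longrightarrow> path lab c \<sigma> d \<Longrightarrow> (b, d) \<in> S"
proof (induction \<sigma> arbitrary: b d)
  case Nil then show ?case by simp
next
  case (Cons e \<sigma>)
  show ?case
  proof (cases e)
    case Down
    then obtain l l' where "path lab a \<sigma> l" "lab l = Lam b" "path lab c \<sigma> l'" "lab l' = Lam d"
      using Cons.prems by auto
    note q = this
    have "(l, l') \<in> S" using Cons.IH[OF Cons.prems(1,2) q(1) q(3)] .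
    then show ?thesis using prop_lam[OF Cons.prems(1) _ q(2) q(4)] by blast
  next
    case SW
    then obtain l l' x y where "path lab a \<sigma> l" "lab l = App b x" "path lab c \<sigma> l'" "lab l' = App d y"
      using Cons.prems by auto
    note q = this
    have "(l, l') \<in> S" using Cons.IH[OF Cons.prems(1,2) q(1) q(3)] .
    then show ?thesis using prop_app[OF Cons.prems(1) _ q(2) q(4)] by blast
  next
    case SE
    then obtain l l' x y where "path lab a \<sigma> l" "lab l = App x b" "path lab c \<sigma> l'" "lab l' = App y d"
      using Cons.prems by auto
    note q = this
    have "(l, l') \<in> S" using Cons.IH[OF Cons.prems(1,2) q(1) q(3)] .
    then show ?thesis using prop_app[OF Cons.prems(1) _ q(2) q(4)] by blast
  qed
qed

lemma hom_nodes: "blind_bisimulation lab R \<Longrightarrow> (x, y) \<in> R \<Longrightarrow> homogeneous_nodes lab x y"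
  unfolding blind_bisimulation_def homogeneous_def by blast

lemma hom_path: "blind_bisimulation lab R \<Longrightarrow> (a, c) \<in> R \<Longrightarrow> path lab a \<sigma> b \<Longrightarrow> \<exists>d. path lab c \<sigma> d \<and> (b, d) \<in> R"
proof (induction \<sigma> arbitrary: b)
  case Nil then show ?case by simp
next
  case (Cons e \<sigma>)
  have pr: "propagated lab R" using Cons.prems(1) by (simp add: blind_bisimulation_def)
  show ?case
  proof (cases e)
    case Down
    then obtain l where l: "path lab a \<sigma> l" "lab l = Lam b" using Cons.prems by auto
    then obtain d where d: "path lab c \<sigma> d" "(l, d) \<in> R" using Cons by blast
    then obtain b' where b': "lab d = Lam b'" using l hom_nodes[OF Cons.prems(1) d(2)]
      by (auto simp add: homogeneous_nodes_def)
    have "(b, b') \<in> R" using pr d(2) l(2) b' unfolding propagated_def by blast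
    then show ?thesis using d b' Down by auto
  next
    case SW
    then obtain l m2 where l: "path lab a \<sigma> l" "lab l = App b m2" using Cons.prems by auto
    then obtain d where d: "path lab c \<sigma> d" "(l, d) \<in> R" using Cons by blast
    then obtain b1 b2 where b': "lab d = App b1 b2" using l hom_nodes[OF Cons.prems(1) d(2)]
      by (auto simp add: homogeneous_nodes_def)
    have "(b, b1) \<in> R" using pr d(2) l(2) b' unfolding propagated_def by blast
    then show ?thesis using d b' SW by auto
  next
    case SE
    then obtain l m1 where l: "path lab a \<sigma> l" "lab l = App m1 b" using Cons.prems by auto
    then obtain d where d: "path lab c \<sigma> d" "(l, d) \<in> R" using Cons by blast
    then obtain b1 b2 where b': "lab d = App b1 b2" using l hom_nodes[OF Cons.prems(1) d(2)]
      by (auto simp add: homogeneous_nodes_def)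
    have "(b, b2) \<in> R" using pr d(2) l(2) b' unfolding propagated_def by blast
    then show ?thesis using d b' SE by auto
  qed
qed

lemma in_N_lam: "pre_lambda_graph N lab \<Longrightarrow> x \<in> N \<Longrightarrow> lab x = Lam a \<Longrightarrow> a \<in> N"
  unfolding pre_lambda_graph_def by blast
lemma in_N_app: "pre_lambda_graph N lab \<Longrightarrow> x \<in> N \<Longrightarrow> lab x = App a b \<Longrightarrow> a \<in> N \<and> b \<in> N"
  unfolding pre_lambda_graph_def by blast

lemma path_in_N: "pre_lambda_graph N lab \<Longrightarrow> n \<in> N \<Longrightarrow> path lab n \<tau> m \<Longrightarrow> m \<in> N"
proof (induction \<tau> arbitrary: m)
  case Nil then show ?case by simp
next
  case (Cons e \<sigma>) then show ?case
    by (cases e) (auto dest: in_N_lam in_N_app)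
qed
lemma path_pow: "(\<forall>i. path lab (g i) \<sigma> (g (Suc i))) \<Longrightarrow> path lab (g i) (concat (replicate k \<sigma>)) (g (i + k))"
proof (induction k)
  case 0 then show ?case by (auto intro: path.intros)
next
  case (Suc k)
  have "path lab (g i) (\<sigma> @ concat (replicate k \<sigma>)) (g (Suc (i + k)))"
    using path_app[OF spec[OF Suc.prems, of "i+k"] Suc.IH[OF Suc.prems]] .
  then show ?case by simp
qed

lemma no_chain:
  assumes lg: "lambda_graph N lab" and g0: "g 0 \<in> N" and ne: "\<sigma> \<noteq> []"
    and st: "\<forall>i. path lab (g i) \<sigma> (g (Suc i))"
  shows False
proof -
  have pre: "pre_lambda_graph N lab" and fin: "finite N"
    and acyc: "\<forall>n\<in>N. \<forall>\<tau>. path lab n \<tau> n \<longrightarrow> \<tau> = []" using lg by (auto simp: lambda_graph_def)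
  have inN: "g i \<in> N" for i
  proof (induction i)
    case 0 show ?case using g0 by simp
  next
    case (Suc i) show ?case using path_in_N[OF pre Suc.IH spec[OF st, of i]] .
  qed
  have "\<not> inj g"
  proof
    assume "inj g"
    then have "finite (UNIV :: nat set)"
    proof -
      have "finite (range g)" using finite_subset[of "range g" N] inN fin by blast
      then show ?thesis using finite_imageD[of g UNIV] \<open>inj g\<close> by simp
    qed
    then show False by simp
  qed
  then obtain i j where ij: "g i = g j" "i < j"
    by (metis inj_def linorder_neqE_nat)
  then have "path lab (g i) (concat (replicate (j - i) \<sigma>)) (g i)"
    using path_pow[OF st, of i "j - i"] by simp
  then have "concat (replicate (j - i) \<sigma>) = []" using acyc inN by blast
  then show False using ne ij(2) by simp
qed

lemma hn_sym: "homogeneous_nodes lab x y \<Longrightarrow> homogeneous_nodes lab y x"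
  unfolding homogeneous_nodes_def by (elim disjE exE) simp_all

lemma bb_conv: "blind_bisimulation lab R \<Longrightarrow> blind_bisimulation lab (R\<inverse>)"
proof -
  assume bb: "blind_bisimulation lab R"
  have h1: "homogeneous lab (R\<inverse>)" unfolding homogeneous_def
  proof (intro ballI)
    fix p assume "p \<in> R\<inverse>"
    then obtain x y where "p = (x, y)" "(y, x) \<in> R" by (cases p) auto
    then show "case p of (x, y) \<Rightarrow> homogeneous_nodes lab x y" using hom_nodes[OF bb, of y x] hn_sym by simp
  qed
  have pr: "propagated lab R" using bb by (simp add: blind_bisimulation_def)
  have h2: "propagated lab (R\<inverse>)"
    unfolding propagated_def
  proof (rule conjI; intro allI impI)
    fix n m n1 n2 m1 m2
    assume a: "(n, m) \<in> R\<inverse>" "lab n = App n1 n2" "lab m = App m1 m2"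
    show "(n1, m1) \<in> R\<inverse> \<and> (n2, m2) \<in> R\<inverse>"
      using prop_app[OF pr _ a(3) a(2)] a(1) by simp
  next
    fix n m a b
    assume a: "(n, m) \<in> R\<inverse>" "lab n = Lam a" "lab m = Lam b"
    show "(a, b) \<in> R\<inverse>" using prop_lam[OF pr _ a(3) a(2)] a(1) by simp
  qed
  show ?thesis using h1 h2 by (simp add: blind_bisimulation_def)
qed

lemma key:
  fixes lab :: "'n \<Rightarrow> ('n, 'b) node_kind"
  assumes lg: "lambda_graph N lab" and RN: "R \<subseteq> N \<times> N" and bb: "blind_bisimulation lab R"
    and ne: "\<sigma> \<noteq> []"
  shows "\<not> ((a, c) \<in> R \<and> (a, c') \<in> R \<and> path lab c \<sigma> c' \<and> (\<exists>a1. path lab a \<sigma> a1))"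
proof
  define Inv where "Inv = (\<lambda>(a, c, c'). (a, c) \<in> R \<and> (a, c') \<in> R \<and> path lab c \<sigma> c' \<and> (\<exists>a1. path lab a \<sigma> a1))"
  assume "(a, c) \<in> R \<and> (a, c') \<in> R \<and> path lab c \<sigma> c' \<and> (\<exists>a1. path lab a \<sigma> a1)"
  then have i0: "Inv (a, c, c')" by (simp add: Inv_def)
  have step: "\<exists>t'. Inv t' \<and> fst (snd t') = snd (snd t)" if "Inv t" for t
  proof -
    obtain x y z where t: "t = (x, y, z)" by (cases t) auto
    from that t have h: "(x, y) \<in> R" "(x, z) \<in> R" "path lab y \<sigma> z" and "\<exists>a1. path lab x \<sigma> a1"
      by (auto simp: Inv_def)
    then obtain x1 where x1: "path lab x \<sigma> x1" by blast
    obtain z1 where z1: "path lab z \<sigma> z1" "(x1, z1) \<in> R" using hom_path[OF bb h(2) x1] by blast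
    obtain z' where z': "path lab y \<sigma> z'" "(x1, z') \<in> R" using hom_path[OF bb h(1) x1] by blast
    have "z' = z" using path_det[OF z'(1) h(3)] .
    with z' have xz: "(x1, z) \<in> R" by simp
    have bbc: "blind_bisimulation lab (R\<inverse>)" using bb by (rule bb_conv)
    obtain x2 where "path lab x1 \<sigma> x2" using hom_path[OF bbc _ z1(1), of x1] xz by auto
    then have "Inv (x1, z, z1)" using xz z1 by (auto simp: Inv_def)
    then show ?thesis using t by (intro exI[of _ "(x1, z, z1)"]) simp
  qed
  define h where "h = (\<lambda>t :: 'n \<times> 'n \<times> 'n. SOME t'. Inv t' \<and> fst (snd t') = snd (snd t))"
  have hp: "Inv (h t) \<and> fst (snd (h t)) = snd (snd t)" if "Inv t" for t
    unfolding h_def using someI_ex[OF step[OF that]] .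
  define f where "f = (\<lambda>i. (h ^^ i) (a, c, c'))"
  have fS: "f (Suc i) = h (f i)" for i by (simp add: f_def)
  have fi: "Inv (f i)" for i
  proof (induction i)
    case 0 then show ?case using i0 by (simp add: f_def)
  next
    case (Suc i)
    then show ?case using hp fS by metis
  qed
  have fs: "fst (snd (f (Suc i))) = snd (snd (f i))" for i
    using hp[OF fi[of i]] fS[of i] by simp
  define g where "g = (\<lambda>i. fst (snd (f i)))"
  have st: "\<forall>i. path lab (g i) \<sigma> (g (Suc i))"
  proof
    fix i
    obtain x y z where t: "f i = (x, y, z)" by (cases "f i") auto
    show "path lab (g i) \<sigma> (g (Suc i))" using fi[of i] fs[of i] t by (auto simp: g_def Inv_def)
  qed
  have "g 0 \<in> N" using i0 RN by (auto simp: g_def f_def Inv_def)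
  then show False using no_chain[OF lg _ ne st] by blast
qed

lemma propag1: "Q \<subseteq> propagation lab Q"
  unfolding propagation_def by (rule Inter_greatest) simp
lemma propag3: "propagated lab R \<Longrightarrow> Q \<subseteq> R \<Longrightarrow> propagation lab Q \<subseteq> R"
  unfolding propagation_def by (rule Inter_lower) simp
lemma propag2: "propagated lab (propagation lab Q)"
  unfolding propagated_def
proof (rule conjI; intro allI impI)
  fix n m n1 n2 m1 m2
  assume a: "(n, m) \<in> propagation lab Q" "lab n = App n1 n2" "lab m = App m1 m2"
  have "(n1, m1) \<in> S \<and> (n2, m2) \<in> S" if S: "S \<in> {S. Q \<subseteq> S \<and> propagated lab S}" for S
  proof -
    have "(n, m) \<in> S" using a(1) S unfolding propagation_def by (rule InterD)
    moreover have "propagated lab S" using S by simp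
    ultimately show ?thesis using prop_app[OF _ _ a(2,3)] by simp
  qed
  then show "(n1, m1) \<in> propagation lab Q \<and> (n2, m2) \<in> propagation lab Q"
    unfolding propagation_def by (simp add: Inter_iff)
next
  fix n m a b
  assume a: "(n, m) \<in> propagation lab Q" "lab n = Lam a" "lab m = Lam b"
  have "(a, b) \<in> S" if S: "S \<in> {S. Q \<subseteq> S \<and> propagated lab S}" for S
  proof -
    have "(n, m) \<in> S" using a(1) S unfolding propagation_def by (rule InterD)
    moreover have "propagated lab S" using S by simp
    ultimately show ?thesis using prop_lam[OF _ _ a(2,3)] by simp
  qed
  then show "(a, b) \<in> propagation lab Q"
    unfolding propagation_def by (simp add: Inter_iff)
qed

theorem mainTheorem8:
  fixes N :: "'n set" and lab :: "'n \<Rightarrow> ('n, 'a) node_kind"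
    and R Q :: "'n rel" and n m l l' :: 'n and \<tau> :: trace
  assumes "lambda_graph N lab"
    and "R \<subseteq> N \<times> N"
    and "blind_bisimulation lab R"
    and "Q \<subseteq> R"
    and "(n, m) \<in> Q"
    and "\<exists>x. path lab n \<tau> x" and "crosses lab n \<tau> l" and "\<exists>b. lab l = Lam b"
    and "\<exists>y. path lab m \<tau> y" and "crosses lab m \<tau> l'" and "\<exists>b. lab l' = Lam b"
    and "(l, l') \<in> R"
  shows "(l, l') \<in> propagation lab Q"
proof -
  obtain \<alpha>1 \<beta>1 where c1: "\<tau> = \<alpha>1 @ \<beta>1" "path lab n \<beta>1 l" using crosses_ex[OF assms(7)] by blast
  obtain \<alpha>2 \<beta>2 where c2: "\<tau> = \<alpha>2 @ \<beta>2" "path lab m \<beta>2 l'" using crosses_ex[OF assms(10)] by blast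
  obtain x where x: "path lab n \<tau> x" using assms(6) by blast
  obtain y where y: "path lab m \<tau> y" using assms(9) by blast
  have PQ: "(n, m) \<in> propagation lab Q" using propag1 assms(5) by blast
  have prR: "propagated lab R" using assms(3) by (simp add: blind_bisimulation_def)
  have PR: "propagation lab Q \<subseteq> R" using propag3[OF prR assms(4)] .
  have pp: "propagated lab (propagation lab Q)" by (rule propag2)
  have bbc: "blind_bisimulation lab (R\<inverse>)" using bb_conv[OF assms(3)] .
  have RNc: "R\<inverse> \<subseteq> N \<times> N" using assms(2) by auto
  from c1(1) c2(1) have "\<alpha>1 @ \<beta>1 = \<alpha>2 @ \<beta>2" by simp
  then have "(\<exists>\<sigma>. \<alpha>1 = \<alpha>2 @ \<sigma> \<and> \<sigma> @ \<beta>1 = \<beta>2) \<or> (\<exists>\<sigma>. \<alpha>1 @ \<sigma> = \<alpha>2 \<and> \<beta>1 = \<sigma> @ \<beta>2)"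
    unfolding append_eq_append_conv2 by blast
  then show ?thesis
  proof
    assume "\<exists>\<sigma>. \<alpha>1 = \<alpha>2 @ \<sigma> \<and> \<sigma> @ \<beta>1 = \<beta>2"
    then obtain \<sigma> where s: "\<beta>2 = \<sigma> @ \<beta>1" "\<alpha>1 = \<alpha>2 @ \<sigma>" by blast
    obtain k where k: "path lab m \<beta>1 k" "path lab k \<sigma> l'" using path_split[of lab m \<sigma> \<beta>1 l'] c2(2) s(1) by auto
    have lk: "(l, k) \<in> propagation lab Q" using prop_path[OF pp PQ c1(2) k(1)] .
    show ?thesis
    proof (cases "\<sigma> = []")
      case True then have "k = l'" using k(2) by simp
      then show ?thesis using lk by simp
    next
      case False
      obtain z0 where z0: "path lab n \<beta>1 z0" "path lab z0 \<alpha>1 x" using path_split[of lab n \<alpha>1 \<beta>1 x] x c1(1) by auto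
      have "z0 = l" using path_det[OF z0(1) c1(2)] .
      then have "path lab l (\<alpha>2 @ \<sigma>) x" using z0(2) s(2) by simp
      then obtain a1 where "path lab l \<sigma> a1" using path_split[of lab l \<alpha>2 \<sigma> x] by auto
      moreover have "(l, k) \<in> R" using lk PR by blast
      ultimately show ?thesis using key[OF assms(1,2,3) False, of l k l'] k(2) assms(12) by blast
    qed
  next
    assume "\<exists>\<sigma>. \<alpha>1 @ \<sigma> = \<alpha>2 \<and> \<beta>1 = \<sigma> @ \<beta>2"
    then obtain \<sigma> where s: "\<beta>1 = \<sigma> @ \<beta>2" "\<alpha>2 = \<alpha>1 @ \<sigma>" by blast
    obtain k where k: "path lab n \<beta>2 k" "path lab k \<sigma> l" using path_split[of lab n \<sigma> \<beta>2 l] c1(2) s(1) by auto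
    have lk: "(k, l') \<in> propagation lab Q" using prop_path[OF pp PQ k(1) c2(2)] .
    show ?thesis
    proof (cases "\<sigma> = []")
      case True then have "k = l" using k(2) by simp
      then show ?thesis using lk by simp
    next
      case False
      obtain z0 where z0: "path lab m \<beta>2 z0" "path lab z0 \<alpha>2 y" using path_split[of lab m \<alpha>2 \<beta>2 y] y c2(1) by auto
      have "z0 = l'" using path_det[OF z0(1) c2(2)] .
      then have "path lab l' (\<alpha>1 @ \<sigma>) y" using z0(2) s(2) by simp
      then obtain a1 where "path lab l' \<sigma> a1" using path_split[of lab l' \<alpha>1 \<sigma> y] by auto
      moreover have "(l', k) \<in> R\<inverse>" using lk PR by blast
      moreover have "(l', l) \<in> R\<inverse>" using assms(12) by simp
      ultimately show ?thesis using key[OF assms(1) RNc bbc False, of l' k l] k(2) by blast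
    qed
  qed
qed

end
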